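(* Let $A\subseteq B$ be a ring extension (commutative rings with identity) with the finite character. Then every $B$-regular and locally finitely generated ideal of $A$ is finitely generated.
   Context: An $A$-submodule $S$ of $B$ is called $B$-regular if $SB=B$. The extension $A\subseteq B$ has the finite character if every $B$-regular ideal of $A$ is contained in only finitely many maximal ideals of $A$. An ideal $\mathfrak a$ of $A$ is locally finitely generated if $\mathfrak aA_{\mathfrak m}$ is a finitely generated ideal of $A_{\mathfrak m}$ for every maximal ideal $\mathfrak m$ of $A$. *)

theory Defs
  imports "HOL-Algebra.Algebra"
begin

definition fin_gen_ideal :: "('a, 'b) ring_scheme \<Rightarrow> 'a set \<Rightarrow> bool" where
  "fin_gen_ideal R I \<longleftrightarrow> ideal I R \<and> (\<exists>S. finite S \<and> S \<subseteq> carrier R \<and> I = genideal R S)"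

text \<open>Localization R_p of a commutative ring R at a prime ideal p, built as
  equivalence classes of fractions r/s with s outside p.\<close>
definition loc_rel :: "('a, 'b) ring_scheme \<Rightarrow> 'a set \<Rightarrow> (('a \<times> 'a) \<times> ('a \<times> 'a)) set" where
  "loc_rel R p = {((r, s), (r', s')). r \<in> carrier R \<and> s \<in> carrier R - p \<and>
      r' \<in> carrier R \<and> s' \<in> carrier R - p \<and>
      (\<exists>t \<in> carrier R - p. t \<otimes>\<^bsub>R\<^esub> (r \<otimes>\<^bsub>R\<^esub> s' \<ominus>\<^bsub>R\<^esub> r' \<otimes>\<^bsub>R\<^esub> s) = \<zero>\<^bsub>R\<^esub>)}"

definition frac :: "('a, 'b) ring_scheme \<Rightarrow> 'a set \<Rightarrow> 'a \<Rightarrow> 'a \<Rightarrow> ('a \<times> 'a) set" where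
  "frac R p r s = loc_rel R p `` {(r, s)}"

definition loc_mult :: "('a, 'b) ring_scheme \<Rightarrow> 'a set \<Rightarrow> ('a \<times> 'a) set \<Rightarrow> ('a \<times> 'a) set \<Rightarrow> ('a \<times> 'a) set" where
  "loc_mult R p U V = \<Union>{C. \<exists>r s r2 s2. C = frac R p (r \<otimes>\<^bsub>R\<^esub> r2) (s \<otimes>\<^bsub>R\<^esub> s2) \<and> (r, s) \<in> U \<and> (r2, s2) \<in> V}"

definition loc_add :: "('a, 'b) ring_scheme \<Rightarrow> 'a set \<Rightarrow> ('a \<times> 'a) set \<Rightarrow> ('a \<times> 'a) set \<Rightarrow> ('a \<times> 'a) set" where
  "loc_add R p U V = \<Union>{C. \<exists>r s r2 s2. C = frac R p (r \<otimes>\<^bsub>R\<^esub> s2 \<oplus>\<^bsub>R\<^esub> r2 \<otimes>\<^bsub>R\<^esub> s) (s \<otimes>\<^bsub>R\<^esub> s2) \<and> (r, s) \<in> U \<and> (r2, s2) \<in> V}"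

definition localization :: "('a, 'b) ring_scheme \<Rightarrow> 'a set \<Rightarrow> ('a \<times> 'a) set ring" where
  "localization R p =
    \<lparr> carrier = (carrier R \<times> (carrier R - p)) // loc_rel R p,
      monoid.mult = loc_mult R p,
      one = frac R p \<one>\<^bsub>R\<^esub> \<one>\<^bsub>R\<^esub>,
      ring.zero = frac R p \<zero>\<^bsub>R\<^esub> \<one>\<^bsub>R\<^esub>,
      ring.add = loc_add R p \<rparr>"

definition loc_ideal :: "('a, 'b) ring_scheme \<Rightarrow> 'a set \<Rightarrow> 'a set \<Rightarrow> ('a \<times> 'a) set set" where
  "loc_ideal R p I = genideal (localization R p) ((\<lambda>x. frac R p x \<one>\<^bsub>R\<^esub>) ` I)"

definition locally_fin_gen :: "('a, 'b) ring_scheme \<Rightarrow> 'a set \<Rightarrow> bool" where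
  "locally_fin_gen R I \<longleftrightarrow>
     (\<forall>m. maximalideal m R \<longrightarrow> fin_gen_ideal (localization R m) (loc_ideal R m I))"

definition B_regular :: "('a, 'b) ring_scheme \<Rightarrow> 'a set \<Rightarrow> bool" where
  "B_regular B S \<longleftrightarrow> genideal B S = carrier B"

definition finite_character :: "('a, 'b) ring_scheme \<Rightarrow> 'a set \<Rightarrow> bool" where
  "finite_character B A \<longleftrightarrow>
     (\<forall>I. ideal I (B\<lparr>carrier := A\<rparr>) \<and> B_regular B I \<longrightarrow>
          finite {m. maximalideal m (B\<lparr>carrier := A\<rparr>) \<and> I \<subseteq> m})"

end

theory Submission
  imports Defs
begin

lemma (in ring) krull:
  assumes C: "ideal C R" and n1: "\<one> \<notin> C"
  shows "\<exists>m. maximalideal m R \<and> C \<subseteq> m"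
proof -
  define S where "S = {J. ideal J R \<and> C \<subseteq> J \<and> \<one> \<notin> J}"
  have "\<exists>M\<in>S. \<forall>Y\<in>S. M \<subseteq> Y \<longrightarrow> Y = M"
  proof (rule subset_Zorn_nonempty)
    show "S \<noteq> {}" using C n1 unfolding S_def by blast
  next
    fix Ch assume ne: "Ch \<noteq> {}" and ch: "subset.chain S Ch"
    have ChS: "Ch \<subseteq> S" using ch by (simp add: pred_on.chain_def)
    have "Ch \<subseteq> {I. ideal I R}" using ChS unfolding S_def by auto
    then have "subset.chain {I. ideal I R} Ch" using ch by (simp add: pred_on.chain_def)
    from chain_Union_is_ideal[OF this] ne have "ideal (\<Union>Ch) R" by simp
    moreover have "C \<subseteq> \<Union>Ch" using ne ChS unfolding S_def by auto
    moreover have "\<one> \<notin> \<Union>Ch" using ChS unfolding S_def by auto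
    ultimately show "\<Union>Ch \<in> S" unfolding S_def by simp
  qed
  then obtain M where MS: "M \<in> S" and mx: "\<forall>Y\<in>S. M \<subseteq> Y \<longrightarrow> Y = M" by auto
  have M: "ideal M R" "C \<subseteq> M" "\<one> \<notin> M" using MS unfolding S_def by auto
  have "maximalideal M R"
  proof (rule maximalidealI[OF M(1)])
    show "carrier R \<noteq> M" using M(3) by auto
  next
    fix J assume J: "ideal J R" "M \<subseteq> J" "J \<subseteq> carrier R"
    show "J = M \<or> J = carrier R"
    proof (cases "\<one> \<in> J")
      case True then show ?thesis using ideal.one_imp_carrier[OF J(1)] by blast
    next
      case False
      then have "J \<in> S" using J M unfolding S_def by auto
      then show ?thesis using mx J(2) by blast
    qed
  qed
  then show ?thesis using M by blast
qed

lemma (in cring) conductor_ideal: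
  assumes N: "ideal N R" and x: "x \<in> carrier R"
  shows "ideal {a \<in> carrier R. a \<otimes> x \<in> N} R"
proof (rule idealI[OF ring_axioms])
  interpret N: ideal N R by fact
  show "subgroup {a \<in> carrier R. a \<otimes> x \<in> N} (add_monoid R)"
  proof
    show "{a \<in> carrier R. a \<otimes> x \<in> N} \<subseteq> carrier (add_monoid R)" by auto
    show "\<one>\<^bsub>add_monoid R\<^esub> \<in> {a \<in> carrier R. a \<otimes> x \<in> N}" using x by simp
  next
    fix a b assume a: "a \<in> {a \<in> carrier R. a \<otimes> x \<in> N}" and b: "b \<in> {a \<in> carrier R. a \<otimes> x \<in> N}"
    then show "a \<otimes>\<^bsub>add_monoid R\<^esub> b \<in> {a \<in> carrier R. a \<otimes> x \<in> N}"
      using x by (simp add: l_distr N.a_closed)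
  next
    fix a assume a: "a \<in> {a \<in> carrier R. a \<otimes> x \<in> N}"
    then show "inv\<^bsub>add_monoid R\<^esub> a \<in> {a \<in> carrier R. a \<otimes> x \<in> N}"
      using x by (simp add: a_inv_def[symmetric] l_minus N.a_inv_closed)
  qed
next
  fix a y assume a: "a \<in> {a \<in> carrier R. a \<otimes> x \<in> N}" and y: "y \<in> carrier R"
  then show "y \<otimes> a \<in> {a \<in> carrier R. a \<otimes> x \<in> N}"
    using x ideal.I_l_closed[OF N] by (simp add: m_assoc)
  from a y show "a \<otimes> y \<in> {a \<in> carrier R. a \<otimes> x \<in> N}"
    using x ideal.I_l_closed[OF N] by (simp add: m_assoc m_comm[of a y])
qed

lemma (in ring) fin_gen_union_ideal:
  assumes I: "I \<subseteq> carrier R"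
  shows "ideal {b \<in> carrier R. \<exists>F. finite F \<and> F \<subseteq> I \<and> b \<in> Idl F} R"
proof (rule idealI[OF ring_axioms])
  let ?U = "{b \<in> carrier R. \<exists>F. finite F \<and> F \<subseteq> I \<and> b \<in> Idl F}"
  have gi: "ideal (Idl F) R" if "F \<subseteq> I" for F using I that genideal_ideal by (meson subset_trans)
  show "subgroup ?U (add_monoid R)"
  proof
    show "?U \<subseteq> carrier (add_monoid R)" by auto
    have "\<zero> \<in> Idl {}" by (rule additive_subgroup.zero_closed[OF ideal.axioms(1)[OF gi]]) simp
    then show "\<one>\<^bsub>add_monoid R\<^esub> \<in> ?U" by auto
  next
    fix a b assume a: "a \<in> ?U" and b: "b \<in> ?U"
    then obtain F G where F: "finite F" "F \<subseteq> I" "a \<in> Idl F" and G: "finite G" "G \<subseteq> I" "b \<in> Idl G"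
      by auto
    have FG: "F \<union> G \<subseteq> I" using F(2) G(2) by (rule Un_least)
    have "Idl F \<subseteq> Idl (F \<union> G)" by (rule subset_Idl_subset) (use FG I in auto)
    moreover have "Idl G \<subseteq> Idl (F \<union> G)" by (rule subset_Idl_subset) (use FG I in auto)
    ultimately have "a \<in> Idl (F \<union> G)" "b \<in> Idl (F \<union> G)" using F(3) G(3) by auto
    then have "a \<oplus> b \<in> Idl (F \<union> G)"
      by (rule additive_subgroup.a_closed[OF ideal.axioms(1)[OF gi[OF FG]]])
    moreover have "finite (F \<union> G)" using F(1) G(1) by simp
    ultimately show "a \<otimes>\<^bsub>add_monoid R\<^esub> b \<in> ?U" using a b FG by auto
  next
    fix a assume a: "a \<in> ?U"
    then obtain F where F: "finite F" "F \<subseteq> I" "a \<in> Idl F" by auto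
    have "\<ominus> a \<in> Idl F" by (rule additive_subgroup.a_inv_closed[OF ideal.axioms(1)[OF gi[OF F(2)]] F(3)])
    then show "inv\<^bsub>add_monoid R\<^esub> a \<in> ?U" using a F by (auto simp: a_inv_def[symmetric])
  qed
next
  fix a x assume a: "a \<in> {b \<in> carrier R. \<exists>F. finite F \<and> F \<subseteq> I \<and> b \<in> Idl F}" and x: "x \<in> carrier R"
  then obtain F where F: "finite F" "F \<subseteq> I" "a \<in> Idl F" by auto
  have gi: "ideal (Idl F) R" using I F(2) genideal_ideal by (meson subset_trans)
  have "x \<otimes> a \<in> Idl F" by (rule ideal.I_l_closed[OF gi F(3) x])
  moreover have "a \<otimes> x \<in> Idl F" by (rule ideal.I_r_closed[OF gi F(3) x])
  ultimately show "x \<otimes> a \<in> {b \<in> carrier R. \<exists>F. finite F \<and> F \<subseteq> I \<and> b \<in> Idl F}"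
    "a \<otimes> x \<in> {b \<in> carrier R. \<exists>F. finite F \<and> F \<subseteq> I \<and> b \<in> Idl F}"
    using F a x by auto
qed

lemma (in ring) genideal_finite_elem:
  assumes I: "I \<subseteq> carrier R" and b: "b \<in> Idl I"
  shows "\<exists>F. finite F \<and> F \<subseteq> I \<and> b \<in> Idl F"
proof -
  let ?U = "{b \<in> carrier R. \<exists>F. finite F \<and> F \<subseteq> I \<and> b \<in> Idl F}"
  have "I \<subseteq> ?U"
  proof
    fix y assume "y \<in> I"
    then have "finite {y}" "{y} \<subseteq> I" "y \<in> Idl {y}" using genideal_self[of "{y}"] I by auto
    then show "y \<in> ?U" using \<open>y \<in> I\<close> I by blast
  qed
  then have "Idl I \<subseteq> ?U" using genideal_minimal[OF fin_gen_union_ideal[OF I]] by blast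
  then show ?thesis using b by blast
qed


lemma (in cring) prime_mult_closed:
  assumes "primeideal p R" "s \<in> carrier R - p" "t \<in> carrier R - p"
  shows "s \<otimes> t \<in> carrier R - p"
  using primeideal.I_prime[OF assms(1)] assms(2,3) by auto

lemma (in cring) prime_one:
  assumes "primeideal p R" shows "\<one> \<in> carrier R - p"
  using primeideal.I_notcarr[OF assms] ideal.one_imp_carrier[OF primeideal.axioms(1)[OF assms]] by auto

lemma (in cring) loc_rel_iff:
  "((r,s),(r',s')) \<in> loc_rel R p \<longleftrightarrow> r \<in> carrier R \<and> s \<in> carrier R - p \<and> r' \<in> carrier R \<and> s' \<in> carrier R - p \<and>
      (\<exists>t \<in> carrier R - p. t \<otimes> (r \<otimes> s' \<ominus> r' \<otimes> s) = \<zero>)"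
  by (simp add: loc_rel_def)

lemma (in cring) loc_equiv:
  assumes P: "primeideal p R"
  shows "equiv (carrier R \<times> (carrier R - p)) (loc_rel R p)"
proof (rule equivI)
  show "loc_rel R p \<subseteq> (carrier R \<times> (carrier R - p)) \<times> (carrier R \<times> (carrier R - p))"
    by (auto simp: loc_rel_def)
next
  show "refl_on (carrier R \<times> (carrier R - p)) (loc_rel R p)"
  proof (rule refl_onI)
    fix x assume "x \<in> carrier R \<times> (carrier R - p)"
    then obtain r s where x: "x = (r,s)" "r \<in> carrier R" "s \<in> carrier R - p" by auto
    have "\<one> \<otimes> (r \<otimes> s \<ominus> r \<otimes> s) = \<zero>" using x by (simp add: r_neg minus_eq)
    then show "(x, x) \<in> loc_rel R p" using x prime_one[OF P] loc_rel_iff by blast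
  qed
next
  show "sym (loc_rel R p)"
  proof (rule symI)
    fix x y assume "(x, y) \<in> loc_rel R p"
    then obtain r s r' s' t where xy: "x = (r,s)" "y = (r',s')" "r \<in> carrier R" "s \<in> carrier R - p"
      "r' \<in> carrier R" "s' \<in> carrier R - p" "t \<in> carrier R - p" "t \<otimes> (r \<otimes> s' \<ominus> r' \<otimes> s) = \<zero>"
      by (cases x, cases y) (auto simp: loc_rel_def)
    have "t \<otimes> (r' \<otimes> s \<ominus> r \<otimes> s') = \<ominus> (t \<otimes> (r \<otimes> s' \<ominus> r' \<otimes> s))"
      using xy(3,5) DiffD1[OF xy(4)] DiffD1[OF xy(6)] DiffD1[OF xy(7)] by algebra
    also have "\<dots> = \<zero>" by (subst xy(8)) simp
    finally have "t \<otimes> (r' \<otimes> s \<ominus> r \<otimes> s') = \<zero>" .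
    then show "(y, x) \<in> loc_rel R p" using xy loc_rel_iff by blast
  qed
next
  show "trans (loc_rel R p)"
  proof (rule transI)
    fix x y z assume "(x, y) \<in> loc_rel R p" "(y, z) \<in> loc_rel R p"
    then obtain r s r' s' r'' s'' t t' where xy: "x = (r,s)" "y = (r',s')" "z = (r'',s'')" "r \<in> carrier R" "s \<in> carrier R - p"
      "r' \<in> carrier R" "s' \<in> carrier R - p" "t \<in> carrier R - p" "t \<otimes> (r \<otimes> s' \<ominus> r' \<otimes> s) = \<zero>"
      "r'' \<in> carrier R" "s'' \<in> carrier R - p" "t' \<in> carrier R - p" "t' \<otimes> (r' \<otimes> s'' \<ominus> r'' \<otimes> s') = \<zero>"
      by (cases x, cases y, cases z) (auto simp: loc_rel_def)
    have "(t \<otimes> t' \<otimes> s') \<otimes> (r \<otimes> s'' \<ominus> r'' \<otimes> s) =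
      (t' \<otimes> s'') \<otimes> (t \<otimes> (r \<otimes> s' \<ominus> r' \<otimes> s)) \<oplus> (t \<otimes> s) \<otimes> (t' \<otimes> (r' \<otimes> s'' \<ominus> r'' \<otimes> s'))"
      using xy(4,6,10) DiffD1[OF xy(5)] DiffD1[OF xy(7)] DiffD1[OF xy(8)] DiffD1[OF xy(11)] DiffD1[OF xy(12)] by algebra
    then have "(t \<otimes> t' \<otimes> s') \<otimes> (r \<otimes> s'' \<ominus> r'' \<otimes> s) = \<zero>" using xy by simp
    moreover have "t \<otimes> t' \<otimes> s' \<in> carrier R - p" using xy prime_mult_closed[OF P] by blast
    ultimately show "(x, z) \<in> loc_rel R p" using xy loc_rel_iff by blast
  qed
qed

lemma (in cring) frac_eq:
  assumes P: "primeideal p R" "r \<in> carrier R" "s \<in> carrier R - p" "r' \<in> carrier R" "s' \<in> carrier R - p"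
  shows "frac R p r s = frac R p r' s' \<longleftrightarrow> ((r,s),(r',s')) \<in> loc_rel R p"
  unfolding frac_def using eq_equiv_class_iff[OF loc_equiv[OF P(1)]] P by auto

lemma (in cring) mem_frac: "(a,b) \<in> frac R p r s \<longleftrightarrow> ((r,s),(a,b)) \<in> loc_rel R p"
  by (simp add: frac_def)

lemma (in cring) compat_mult:
  assumes P: "primeideal p R" and h1: "((r,s),(a,b)) \<in> loc_rel R p" and h2: "((r2,s2),(a2,b2)) \<in> loc_rel R p"
  shows "((r \<otimes> r2, s \<otimes> s2),(a \<otimes> a2, b \<otimes> b2)) \<in> loc_rel R p"
proof -
  obtain t t' where xy: "r \<in> carrier R" "s \<in> carrier R - p" "a \<in> carrier R" "b \<in> carrier R - p"
     "t \<in> carrier R - p" "t \<otimes> (r \<otimes> b \<ominus> a \<otimes> s) = \<zero>"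
     "r2 \<in> carrier R" "s2 \<in> carrier R - p" "a2 \<in> carrier R" "b2 \<in> carrier R - p"
     "t' \<in> carrier R - p" "t' \<otimes> (r2 \<otimes> b2 \<ominus> a2 \<otimes> s2) = \<zero>"
    using h1 h2 by (auto simp: loc_rel_def)
  have "(t \<otimes> t') \<otimes> (r \<otimes> r2 \<otimes> (b \<otimes> b2) \<ominus> a \<otimes> a2 \<otimes> (s \<otimes> s2)) =
     (t \<otimes> r \<otimes> b) \<otimes> (t' \<otimes> (r2 \<otimes> b2 \<ominus> a2 \<otimes> s2)) \<oplus> (t' \<otimes> a2 \<otimes> s2) \<otimes> (t \<otimes> (r \<otimes> b \<ominus> a \<otimes> s))"
    using xy(1,3,7,9) DiffD1[OF xy(2)] DiffD1[OF xy(4)] DiffD1[OF xy(5)] DiffD1[OF xy(8)] DiffD1[OF xy(10)] DiffD1[OF xy(11)] by algebra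
  also have "\<dots> = \<zero>" using xy by simp
  finally have "(t \<otimes> t') \<otimes> (r \<otimes> r2 \<otimes> (b \<otimes> b2) \<ominus> a \<otimes> a2 \<otimes> (s \<otimes> s2)) = \<zero>" .
  moreover have "t \<otimes> t' \<in> carrier R - p" "s \<otimes> s2 \<in> carrier R - p" "b \<otimes> b2 \<in> carrier R - p"
    using xy prime_mult_closed[OF P] by blast+
  ultimately show ?thesis using xy loc_rel_iff by auto
qed

lemma (in cring) compat_add:
  assumes P: "primeideal p R" and h1: "((r,s),(a,b)) \<in> loc_rel R p" and h2: "((r2,s2),(a2,b2)) \<in> loc_rel R p"
  shows "((r \<otimes> s2 \<oplus> r2 \<otimes> s, s \<otimes> s2),(a \<otimes> b2 \<oplus> a2 \<otimes> b, b \<otimes> b2)) \<in> loc_rel R p"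
proof -
  obtain t t' where xy: "r \<in> carrier R" "s \<in> carrier R - p" "a \<in> carrier R" "b \<in> carrier R - p"
     "t \<in> carrier R - p" "t \<otimes> (r \<otimes> b \<ominus> a \<otimes> s) = \<zero>"
     "r2 \<in> carrier R" "s2 \<in> carrier R - p" "a2 \<in> carrier R" "b2 \<in> carrier R - p"
     "t' \<in> carrier R - p" "t' \<otimes> (r2 \<otimes> b2 \<ominus> a2 \<otimes> s2) = \<zero>"
    using h1 h2 by (auto simp: loc_rel_def)
  have "(t \<otimes> t') \<otimes> ((r \<otimes> s2 \<oplus> r2 \<otimes> s) \<otimes> (b \<otimes> b2) \<ominus> (a \<otimes> b2 \<oplus> a2 \<otimes> b) \<otimes> (s \<otimes> s2)) =
     (t' \<otimes> s2 \<otimes> b2) \<otimes> (t \<otimes> (r \<otimes> b \<ominus> a \<otimes> s)) \<oplus> (t \<otimes> s \<otimes> b) \<otimes> (t' \<otimes> (r2 \<otimes> b2 \<ominus> a2 \<otimes> s2))"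
    using xy(1,3,7,9) DiffD1[OF xy(2)] DiffD1[OF xy(4)] DiffD1[OF xy(5)] DiffD1[OF xy(8)] DiffD1[OF xy(10)] DiffD1[OF xy(11)] by algebra
  also have "\<dots> = \<zero>" using xy by simp
  finally have "(t \<otimes> t') \<otimes> ((r \<otimes> s2 \<oplus> r2 \<otimes> s) \<otimes> (b \<otimes> b2) \<ominus> (a \<otimes> b2 \<oplus> a2 \<otimes> b) \<otimes> (s \<otimes> s2)) = \<zero>" .
  moreover have "t \<otimes> t' \<in> carrier R - p" "s \<otimes> s2 \<in> carrier R - p" "b \<otimes> b2 \<in> carrier R - p"
    using xy prime_mult_closed[OF P] by blast+
  ultimately show ?thesis using xy loc_rel_iff by auto
qed


lemma (in cring) frac_eqI:
  assumes "primeideal p R" "((r,s),(r',s')) \<in> loc_rel R p"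
  shows "frac R p r s = frac R p r' s'"
  unfolding frac_def by (rule equiv_class_eq[OF loc_equiv[OF assms(1)] assms(2)])

lemma (in cring) loc_refl:
  assumes "primeideal p R" "a \<in> carrier R" "b \<in> carrier R - p"
  shows "((a,b),(a,b)) \<in> loc_rel R p"
  using loc_equiv[OF assms(1)] assms(2,3) unfolding equiv_def refl_on_def by blast

lemma (in cring) loc_mult_frac:
  assumes P: "primeideal p R" "r \<in> carrier R" "s \<in> carrier R - p" "r2 \<in> carrier R" "s2 \<in> carrier R - p"
  shows "loc_mult R p (frac R p r s) (frac R p r2 s2) = frac R p (r \<otimes> r2) (s \<otimes> s2)"
proof -
  have "{C. \<exists>a b a2 b2. C = frac R p (a \<otimes> a2) (b \<otimes> b2) \<and> (a, b) \<in> frac R p r s \<and> (a2, b2) \<in> frac R p r2 s2}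
      = {frac R p (r \<otimes> r2) (s \<otimes> s2)}"
  proof (intro Set.set_eqI iffI)
    fix C assume "C \<in> {C. \<exists>a b a2 b2. C = frac R p (a \<otimes> a2) (b \<otimes> b2) \<and> (a, b) \<in> frac R p r s \<and> (a2, b2) \<in> frac R p r2 s2}"
    then obtain a b a2 b2 where C: "C = frac R p (a \<otimes> a2) (b \<otimes> b2)" "((r,s),(a,b)) \<in> loc_rel R p"
      "((r2,s2),(a2,b2)) \<in> loc_rel R p" by (auto simp: mem_frac)
    have "frac R p (r \<otimes> r2) (s \<otimes> s2) = frac R p (a \<otimes> a2) (b \<otimes> b2)"
      by (rule frac_eqI[OF P(1) compat_mult[OF P(1) C(2,3)]])
    then show "C \<in> {frac R p (r \<otimes> r2) (s \<otimes> s2)}" using C by simp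
  next
    fix C assume "C \<in> {frac R p (r \<otimes> r2) (s \<otimes> s2)}"
    then show "C \<in> {C. \<exists>a b a2 b2. C = frac R p (a \<otimes> a2) (b \<otimes> b2) \<and> (a, b) \<in> frac R p r s \<and> (a2, b2) \<in> frac R p r2 s2}"
      using loc_refl[OF P(1) P(2,3)] loc_refl[OF P(1) P(4,5)] by (auto simp: mem_frac)
  qed
  then show ?thesis unfolding loc_mult_def by simp
qed

lemma (in cring) loc_add_frac:
  assumes P: "primeideal p R" "r \<in> carrier R" "s \<in> carrier R - p" "r2 \<in> carrier R" "s2 \<in> carrier R - p"
  shows "loc_add R p (frac R p r s) (frac R p r2 s2) = frac R p (r \<otimes> s2 \<oplus> r2 \<otimes> s) (s \<otimes> s2)"
proof -
  have "{C. \<exists>a b a2 b2. C = frac R p (a \<otimes> b2 \<oplus> a2 \<otimes> b) (b \<otimes> b2) \<and> (a, b) \<in> frac R p r s \<and> (a2, b2) \<in> frac R p r2 s2}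
      = {frac R p (r \<otimes> s2 \<oplus> r2 \<otimes> s) (s \<otimes> s2)}"
  proof (intro Set.set_eqI iffI)
    fix C assume "C \<in> {C. \<exists>a b a2 b2. C = frac R p (a \<otimes> b2 \<oplus> a2 \<otimes> b) (b \<otimes> b2) \<and> (a, b) \<in> frac R p r s \<and> (a2, b2) \<in> frac R p r2 s2}"
    then obtain a b a2 b2 where C: "C = frac R p (a \<otimes> b2 \<oplus> a2 \<otimes> b) (b \<otimes> b2)" "((r,s),(a,b)) \<in> loc_rel R p"
      "((r2,s2),(a2,b2)) \<in> loc_rel R p" by (auto simp: mem_frac)
    have "frac R p (r \<otimes> s2 \<oplus> r2 \<otimes> s) (s \<otimes> s2) = frac R p (a \<otimes> b2 \<oplus> a2 \<otimes> b) (b \<otimes> b2)"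
      by (rule frac_eqI[OF P(1) compat_add[OF P(1) C(2,3)]])
    then show "C \<in> {frac R p (r \<otimes> s2 \<oplus> r2 \<otimes> s) (s \<otimes> s2)}" using C by simp
  next
    fix C assume "C \<in> {frac R p (r \<otimes> s2 \<oplus> r2 \<otimes> s) (s \<otimes> s2)}"
    then show "C \<in> {C. \<exists>a b a2 b2. C = frac R p (a \<otimes> b2 \<oplus> a2 \<otimes> b) (b \<otimes> b2) \<and> (a, b) \<in> frac R p r s \<and> (a2, b2) \<in> frac R p r2 s2}"
      using loc_refl[OF P(1) P(2,3)] loc_refl[OF P(1) P(4,5)] by (auto simp: mem_frac)
  qed
  then show ?thesis unfolding loc_add_def by simp
qed

lemma (in cring) loc_carrier_frac:
  "x \<in> carrier (localization R p) \<Longrightarrow> \<exists>r\<in>carrier R. \<exists>s\<in>carrier R - p. x = frac R p r s"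
  by (auto simp: localization_def quotient_def frac_def)

lemma (in cring) frac_carrier:
  "r \<in> carrier R \<Longrightarrow> s \<in> carrier R - p \<Longrightarrow> frac R p r s \<in> carrier (localization R p)"
  by (simp add: localization_def frac_def quotientI)

definition locX :: "('a, 'b) ring_scheme \<Rightarrow> 'a set \<Rightarrow> 'a set \<Rightarrow> ('a \<times> 'a) set set" where
  "locX R p K = {frac R p y t | y t. y \<in> K \<and> t \<in> carrier R - p}"

lemma (in cring) locX_ideal:
  assumes P: "primeideal p R" and K: "ideal K R" and L: "ring (localization R p)"
  shows "ideal (locX R p K) (localization R p)"
proof -
  interpret K: ideal K R by fact
  have Kc: "K \<subseteq> carrier R" by (rule K.a_subset)
  have lc: "c \<otimes>\<^bsub>localization R p\<^esub> a \<in> locX R p K"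
    if a: "a \<in> locX R p K" and c: "c \<in> carrier (localization R p)" for a c
  proof -
    obtain y t where a': "a = frac R p y t" "y \<in> K" "t \<in> carrier R - p" using a unfolding locX_def by blast
    obtain r s where c': "r \<in> carrier R" "s \<in> carrier R - p" "c = frac R p r s" using loc_carrier_frac[OF c] by blast
    have yc: "y \<in> carrier R" using a' Kc by blast
    have "c \<otimes>\<^bsub>localization R p\<^esub> a = frac R p (r \<otimes> y) (s \<otimes> t)"
      using a' c' yc loc_mult_frac[OF P c'(1,2) yc a'(3)] by (simp add: localization_def)
    moreover have "r \<otimes> y \<in> K" using a' c' K.I_l_closed by blast
    moreover have "s \<otimes> t \<in> carrier R - p" using prime_mult_closed[OF P] a' c' by blast
    ultimately show ?thesis unfolding locX_def by blast
  qed
  have rc: "a \<otimes>\<^bsub>localization R p\<^esub> c \<in> locX R p K"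
    if a: "a \<in> locX R p K" and c: "c \<in> carrier (localization R p)" for a c
  proof -
    obtain y t where a': "a = frac R p y t" "y \<in> K" "t \<in> carrier R - p" using a unfolding locX_def by blast
    obtain r s where c': "r \<in> carrier R" "s \<in> carrier R - p" "c = frac R p r s" using loc_carrier_frac[OF c] by blast
    have yc: "y \<in> carrier R" using a' Kc by blast
    have "a \<otimes>\<^bsub>localization R p\<^esub> c = frac R p (y \<otimes> r) (t \<otimes> s)"
      using a' c' yc loc_mult_frac[OF P yc a'(3) c'(1,2)] by (simp add: localization_def)
    moreover have "y \<otimes> r \<in> K" using a' c' K.I_r_closed by blast
    moreover have "t \<otimes> s \<in> carrier R - p" using prime_mult_closed[OF P] a' c' by blast
    ultimately show ?thesis unfolding locX_def by blast
  qed
  have sub: "locX R p K \<subseteq> carrier (localization R p)" using frac_carrier Kc unfolding locX_def by blast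
  show ?thesis
  proof (rule idealI[OF L])
    show "subgroup (locX R p K) (add_monoid (localization R p))"
    proof
      show "locX R p K \<subseteq> carrier (add_monoid (localization R p))" using sub by simp
      have "frac R p \<zero> \<one> \<in> locX R p K" using prime_one[OF P] K.zero_closed unfolding locX_def by blast
      then show "\<one>\<^bsub>add_monoid (localization R p)\<^esub> \<in> locX R p K" by (simp add: localization_def)
    next
      fix a b assume a: "a \<in> locX R p K" and b: "b \<in> locX R p K"
      obtain y t where a': "a = frac R p y t" "y \<in> K" "t \<in> carrier R - p" using a unfolding locX_def by blast
      obtain y' t' where b': "b = frac R p y' t'" "y' \<in> K" "t' \<in> carrier R - p" using b unfolding locX_def by blast
      have yc: "y \<in> carrier R" "y' \<in> carrier R" using a' b' Kc by blast+
      have "a \<otimes>\<^bsub>add_monoid (localization R p)\<^esub> b = frac R p (y \<otimes> t' \<oplus> y' \<otimes> t) (t \<otimes> t')"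
        using a' b' loc_add_frac[OF P yc(1) a'(3) yc(2) b'(3)] by (simp add: localization_def)
      moreover have "y \<otimes> t' \<oplus> y' \<otimes> t \<in> K" using a' b' K.I_r_closed K.a_closed by blast
      moreover have "t \<otimes> t' \<in> carrier R - p" using prime_mult_closed[OF P] a' b' by blast
      ultimately show "a \<otimes>\<^bsub>add_monoid (localization R p)\<^esub> b \<in> locX R p K" unfolding locX_def by blast
    next
      fix a assume a: "a \<in> locX R p K"
      have ac: "a \<in> carrier (localization R p)" using sub a by blast
      have one: "\<one>\<^bsub>localization R p\<^esub> \<in> carrier (localization R p)"
        by (rule monoid.one_closed[OF ring.is_monoid[OF L]])
      have m1: "\<ominus>\<^bsub>localization R p\<^esub> \<one>\<^bsub>localization R p\<^esub> \<in> carrier (localization R p)"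
        by (rule abelian_group.a_inv_closed[OF ring.is_abelian_group[OF L] one])
      have "\<ominus>\<^bsub>localization R p\<^esub> \<one>\<^bsub>localization R p\<^esub> \<otimes>\<^bsub>localization R p\<^esub> a
          = \<ominus>\<^bsub>localization R p\<^esub> (\<one>\<^bsub>localization R p\<^esub> \<otimes>\<^bsub>localization R p\<^esub> a)"
        by (rule ring.l_minus[OF L one ac])
      also have "\<dots> = \<ominus>\<^bsub>localization R p\<^esub> a" using monoid.l_one[OF ring.is_monoid[OF L] ac] by simp
      finally have "inv\<^bsub>add_monoid (localization R p)\<^esub> a
          = \<ominus>\<^bsub>localization R p\<^esub> \<one>\<^bsub>localization R p\<^esub> \<otimes>\<^bsub>localization R p\<^esub> a"
        by (simp add: a_inv_def)
      then show "inv\<^bsub>add_monoid (localization R p)\<^esub> a \<in> locX R p K" using lc[OF a m1] by simp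
    qed
  next
    fix a x assume "a \<in> locX R p K" "x \<in> carrier (localization R p)"
    then show "x \<otimes>\<^bsub>localization R p\<^esub> a \<in> locX R p K" "a \<otimes>\<^bsub>localization R p\<^esub> x \<in> locX R p K"
      using lc rc by blast+
  qed
qed

lemma (in cring) local_fin:
  assumes M: "maximalideal m R" and I: "ideal I R"
    and fg: "fin_gen_ideal (localization R m) (loc_ideal R m I)"
  shows "\<exists>F. finite F \<and> F \<subseteq> I \<and> (\<forall>x\<in>I. \<exists>s\<in>carrier R - m. s \<otimes> x \<in> Idl F)"
proof -
  have P: "primeideal m R" by (rule maximalideal_prime[OF M])
  interpret I: ideal I R by fact
  obtain S where S: "ideal (loc_ideal R m I) (localization R m)" "finite S" "S \<subseteq> carrier (localization R m)"
    "loc_ideal R m I = genideal (localization R m) S"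
    using fg unfolding fin_gen_ideal_def by blast
  have L: "ring (localization R m)" using S(1) ideal.axioms(2) by blast
  have one: "\<one> \<in> carrier R - m" by (rule prime_one[OF P])
  have img: "(\<lambda>x. frac R m x \<one>) ` I \<subseteq> locX R m I" unfolding locX_def using one by blast
  have imgc: "(\<lambda>x. frac R m x \<one>) ` I \<subseteq> carrier (localization R m)"
    using frac_carrier one I.a_subset by blast
  have "S \<subseteq> genideal (localization R m) S" by (rule ring.genideal_self[OF L S(3)])
  also have "\<dots> = genideal (localization R m) ((\<lambda>x. frac R m x \<one>) ` I)" by (metis S(4) loc_ideal_def)
  also have "\<dots> \<subseteq> locX R m I" by (rule ring.genideal_minimal[OF L locX_ideal[OF P I L] img])
  finally have SX: "S \<subseteq> locX R m I" .
  define g where "g \<sigma> = (SOME y. y \<in> I \<and> (\<exists>t\<in>carrier R - m. \<sigma> = frac R m y t))" for \<sigma>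
  have g: "g \<sigma> \<in> I \<and> (\<exists>t\<in>carrier R - m. \<sigma> = frac R m (g \<sigma>) t)" if "\<sigma> \<in> S" for \<sigma>
    unfolding g_def by (rule someI_ex) (use SX that in \<open>auto simp: locX_def\<close>)
  define F where "F = g ` S"
  have F: "finite F" "F \<subseteq> I" using S(2) g unfolding F_def by auto
  have Fc: "F \<subseteq> carrier R" using F(2) I.a_subset by blast
  have IF: "ideal (Idl F) R" by (rule genideal_ideal[OF Fc])
  have "S \<subseteq> locX R m (Idl F)"
  proof
    fix \<sigma> assume s: "\<sigma> \<in> S"
    with g obtain t where "t \<in> carrier R - m" "\<sigma> = frac R m (g \<sigma>) t" by blast
    moreover have "g \<sigma> \<in> Idl F" using genideal_self[OF Fc] s F_def by blast
    ultimately show "\<sigma> \<in> locX R m (Idl F)" unfolding locX_def by blast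
  qed
  then have SF: "genideal (localization R m) S \<subseteq> locX R m (Idl F)"
    by (rule ring.genideal_minimal[OF L locX_ideal[OF P IF L]])
  have "\<forall>x\<in>I. \<exists>s\<in>carrier R - m. s \<otimes> x \<in> Idl F"
  proof
    fix x assume x: "x \<in> I"
    have xc: "x \<in> carrier R" using x I.a_subset by blast
    have "frac R m x \<one> \<in> genideal (localization R m) ((\<lambda>x. frac R m x \<one>) ` I)"
      using ring.genideal_self[OF L imgc] x by blast
    then have "frac R m x \<one> \<in> locX R m (Idl F)" using SF S(4) unfolding loc_ideal_def by blast
    then obtain y t where y: "frac R m x \<one> = frac R m y t" "y \<in> Idl F" "t \<in> carrier R - m"
      unfolding locX_def by blast
    have yc: "y \<in> carrier R" using ideal.Icarr[OF IF y(2)] .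
    have "((x,\<one>),(y,t)) \<in> loc_rel R m" using frac_eq[OF P xc one yc y(3)] y(1) by blast
    then obtain u where u: "u \<in> carrier R - m" "u \<otimes> (x \<otimes> t \<ominus> y \<otimes> \<one>) = \<zero>" by (auto simp: loc_rel_def)
    have "(u \<otimes> t) \<otimes> x = (u \<otimes> (x \<otimes> t \<ominus> y \<otimes> \<one>)) \<oplus> u \<otimes> y" using DiffD1[OF u(1)] xc yc DiffD1[OF y(3)] by algebra
    also have "\<dots> = u \<otimes> y" using u yc by simp
    finally have "(u \<otimes> t) \<otimes> x = u \<otimes> y" .
    moreover have "u \<otimes> y \<in> Idl F" using ideal.I_l_closed[OF IF y(2)] u by blast
    moreover have "u \<otimes> t \<in> carrier R - m" using prime_mult_closed[OF P u(1) y(3)] .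
    ultimately show "\<exists>s\<in>carrier R - m. s \<otimes> x \<in> Idl F" by metis
  qed
  then show ?thesis using F by blast
qed

lemma (in cring) assemble:
  assumes I: "ideal I R" and F0: "finite F0" "F0 \<subseteq> I"
    and fin: "finite {m. maximalideal m R \<and> Idl F0 \<subseteq> m}"
    and lfg: "locally_fin_gen R I"
  shows "fin_gen_ideal R I"
proof -
  interpret I: ideal I R by fact
  define Ms where "Ms = {m. maximalideal m R \<and> Idl F0 \<subseteq> m}"
  have "\<forall>m\<in>Ms. \<exists>F. finite F \<and> F \<subseteq> I \<and> (\<forall>x\<in>I. \<exists>s\<in>carrier R - m. s \<otimes> x \<in> Idl F)"
    using local_fin[OF _ I] lfg unfolding locally_fin_gen_def Ms_def by blast
  then obtain h where h: "\<forall>m\<in>Ms. finite (h m) \<and> h m \<subseteq> I \<and> (\<forall>x\<in>I. \<exists>s\<in>carrier R - m. s \<otimes> x \<in> Idl (h m))"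
    by metis
  define G where "G = F0 \<union> \<Union>(h ` Ms)"
  have G: "finite G" "G \<subseteq> I" using h F0 fin unfolding G_def Ms_def by auto
  have Gc: "G \<subseteq> carrier R" using G(2) I.a_subset by blast
  have IG: "ideal (Idl G) R" by (rule genideal_ideal[OF Gc])
  have "I = Idl G"
  proof
    show "Idl G \<subseteq> I" by (rule genideal_minimal[OF I G(2)])
    show "I \<subseteq> Idl G"
    proof
      fix x assume x: "x \<in> I"
      have xc: "x \<in> carrier R" using x I.a_subset by blast
      define C where "C = {a \<in> carrier R. a \<otimes> x \<in> Idl G}"
      have C: "ideal C R" unfolding C_def by (rule conductor_ideal[OF IG xc])
      have "Idl F0 \<subseteq> Idl G" using subset_Idl_subset[OF Gc] unfolding G_def by blast
      moreover have "Idl G \<subseteq> C" unfolding C_def using ideal.I_r_closed[OF IG] xc ideal.Icarr[OF IG] by blast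
      ultimately have F0C: "Idl F0 \<subseteq> C" by blast
      show "x \<in> Idl G"
      proof (rule ccontr)
        assume nx: "x \<notin> Idl G"
        have "\<one> \<notin> C" using nx xc unfolding C_def by simp
        then obtain m where m: "maximalideal m R" "C \<subseteq> m" using krull[OF C] by blast
        then have mMs: "m \<in> Ms" using F0C unfolding Ms_def by blast
        then obtain s where s: "s \<in> carrier R - m" "s \<otimes> x \<in> Idl (h m)" using h x by blast
        have "Idl (h m) \<subseteq> Idl G" using subset_Idl_subset[OF Gc] mMs unfolding G_def by blast
        then have "s \<in> C" using s unfolding C_def by blast
        then show False using s m by blast
      qed
    qed
  qed
  then show ?thesis unfolding fin_gen_ideal_def using I G Gc by blast
qed

theorem proposition3p4:
  fixes B :: "('a, 'b) ring_scheme" and A :: "'a set" and I :: "'a set"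
  assumes "cring B"
    and "subring A B"
    and "finite_character B A"
    and "ideal I (B\<lparr>carrier := A\<rparr>)"
    and "B_regular B I"
    and "locally_fin_gen (B\<lparr>carrier := A\<rparr>) I"
  shows "fin_gen_ideal (B\<lparr>carrier := A\<rparr>) I"
proof -
  interpret B: cring B by fact
  have subc: "subcring A B" by (rule B.subcringI'[OF assms(2)])
  have Ac: "A \<subseteq> carrier B" using subringE(1)[OF assms(2)] .
  have cR: "cring (B\<lparr>carrier := A\<rparr>)" using B.subcring_iff[OF Ac] subc by blast
  interpret R: cring "B\<lparr>carrier := A\<rparr>" by (rule cR)
  interpret I: ideal I "B\<lparr>carrier := A\<rparr>" by fact
  have IA: "I \<subseteq> A" using I.a_subset by simp
  have IB: "I \<subseteq> carrier B" using IA Ac by blast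
  have "\<one>\<^bsub>B\<^esub> \<in> genideal B I" using assms(5) unfolding B_regular_def by simp
  then obtain F0 where F0: "finite F0" "F0 \<subseteq> I" "\<one>\<^bsub>B\<^esub> \<in> genideal B F0"
    using B.genideal_finite_elem[OF IB] by blast
  define K where "K = genideal (B\<lparr>carrier := A\<rparr>) F0"
  have F0A: "F0 \<subseteq> A" using F0 IA by blast
  have K: "ideal K (B\<lparr>carrier := A\<rparr>)" unfolding K_def by (rule R.genideal_ideal) (simp add: F0A)
  have KA: "K \<subseteq> A" using additive_subgroup.a_subset[OF ideal.axioms(1)[OF K]] by simp
  have F0K: "F0 \<subseteq> K" unfolding K_def using R.genideal_self F0A by simp
  have KB: "K \<subseteq> carrier B" using KA Ac by blast
  have "genideal B F0 \<subseteq> genideal B K" by (rule B.subset_Idl_subset[OF KB F0K])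
  then have "\<one>\<^bsub>B\<^esub> \<in> genideal B K" using F0 by blast
  then have "B_regular B K" unfolding B_regular_def
    using ideal.one_imp_carrier[OF B.genideal_ideal[OF KB]] by blast
  then have fin: "finite {m. maximalideal m (B\<lparr>carrier := A\<rparr>) \<and> K \<subseteq> m}"
    using assms(3) K unfolding finite_character_def by blast
  show ?thesis
    by (rule R.assemble[OF assms(4) F0(1,2)]) (use fin assms(6) in \<open>simp_all add: K_def\<close>)
qed

end
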